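(* Let $k$ be a field and let $V_1\xrightarrow{f}V_2\xrightarrow{g}V_3$ be a complex of finite-dimensional $k$-vector spaces, with dual complex $V_3^*\xrightarrow{g^*}V_2^*\xrightarrow{f^*}V_1^*$. Fix a nondegenerate bilinear pairing $\langle\,,\rangle$ on $V_2$ and identify $V_2$ with $V_2^*$ via it. Assume $\mathrm{Im}\,f\subset\mathrm{Im}\,g^*$ (under this identification). Then the identification $V_2=V_2^*$ induces a map $\mathrm{Ker}\,g/\mathrm{Im}\,f\to\mathrm{Ker}\,f^*/\mathrm{Im}\,g^*$, and this map is an isomorphism if and only if $\mathrm{Ker}\,g\cap\mathrm{Im}\,g^*\subset\mathrm{Im}\,f$.
   Formalization: By hypothesis the identification $V_2=V_2^*$ also sends Ker g into $\mathrm{Ker}\,f^*$, that is, <v, f(x)> = 0 for every v in Ker g and x in $V_1$. The statement above fails without it. *)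

theory Defs
  imports Complex_Main "HOL-Library.Function_Algebras"
begin

text \<open>Finite-dimensional vector spaces over a field 'k are modelled as types 'v
with a scalar multiplication s :: 'k \<Rightarrow> 'v \<Rightarrow> 'v forming a finite-dimensional
vector space (locale finite_dimensional_vector_space).\<close>

definition dual_space :: "('k::field \<Rightarrow> 'v::ab_group_add \<Rightarrow> 'v) \<Rightarrow> ('v \<Rightarrow> 'k) set" where
  "dual_space s = {l. Vector_Spaces.linear s (*) l}"

definition dual_map :: "('v \<Rightarrow> 'w) \<Rightarrow> ('w \<Rightarrow> 'k) \<Rightarrow> ('v \<Rightarrow> 'k)" where
  "dual_map h l = l \<circ> h"

definition nondeg_bilinear :: "('k::field \<Rightarrow> 'v::ab_group_add \<Rightarrow> 'v) \<Rightarrow> ('v \<Rightarrow> 'v \<Rightarrow> 'k) \<Rightarrow> bool" where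
  "nondeg_bilinear s b \<longleftrightarrow>
     (\<forall>u. Vector_Spaces.linear s (*) (b u)) \<and>
     (\<forall>v. Vector_Spaces.linear s (*) (\<lambda>u. b u v)) \<and>
     (\<forall>u. (\<forall>v. b u v = 0) \<longrightarrow> u = 0) \<and>
     (\<forall>v. (\<forall>u. b u v = 0) \<longrightarrow> v = 0)"

definition pair_iso :: "('v \<Rightarrow> 'v \<Rightarrow> 'k) \<Rightarrow> 'v \<Rightarrow> ('v \<Rightarrow> 'k)" where
  "pair_iso b v = b v"

text \<open>Quotient A/B of a subspace A by a subspace B \<subseteq> A, as the set of cosets
 (restricted to A).\<close>
definition quot :: "'v::ab_group_add set \<Rightarrow> 'v set \<Rightarrow> 'v set set" where
  "quot A B = (\<lambda>a. {x \<in> A. x - a \<in> B}) ` A"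

text \<open>The map A/B \<rightarrow> C/D induced by a map phi (with phi A \<subseteq> C, phi B \<subseteq> D):
 it sends the coset of a to the coset of phi a.\<close>
definition induced_quot_map ::
  "('v \<Rightarrow> 'w::ab_group_add) \<Rightarrow> 'w set \<Rightarrow> 'w set \<Rightarrow> 'v set \<Rightarrow> 'w set" where
  "induced_quot_map phi C D X = {y \<in> C. \<exists>x\<in>X. y - phi x \<in> D}"

end

theory Submission
  imports Defs
begin

lemma vs_k: "vector_space ((*) :: 'k::field \<Rightarrow> 'k \<Rightarrow> 'k)"
  by unfold_locales (auto simp: algebra_simps)

lemma lin_diff: "Vector_Spaces.linear s (*) h \<Longrightarrow> h (x - y) = h x - h y"
proof -
  assume "Vector_Spaces.linear s (*) h"
  then interpret Vector_Spaces.linear s "(*)" h .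
  show ?thesis by (rule diff)
qed

lemma lin_add: "Vector_Spaces.linear s (*) h \<Longrightarrow> h (x + y) = h x + h y"
proof -
  assume "Vector_Spaces.linear s (*) h"
  then interpret Vector_Spaces.linear s "(*)" h .
  show ?thesis by (rule add)
qed

lemma lin_scale: "Vector_Spaces.linear s (*) h \<Longrightarrow> h (s c x) = c * h x"
proof -
  assume "Vector_Spaces.linear s (*) h"
  then interpret Vector_Spaces.linear s "(*)" h .
  show ?thesis by (rule scale)
qed

lemma lin_sum: "Vector_Spaces.linear s (*) h \<Longrightarrow> h (sum F A) = (\<Sum>a\<in>A. h (F a))"
proof -
  assume "Vector_Spaces.linear s (*) h"
  then interpret Vector_Spaces.linear s "(*)" h .
  show ?thesis by (rule sum)
qed

lemma lin_zero: "Vector_Spaces.linear s (*) h \<Longrightarrow> h 0 = 0"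
proof -
  assume "Vector_Spaces.linear s (*) h"
  then interpret Vector_Spaces.linear s "(*)" h .
  show ?thesis by (rule zero)
qed

lemma lin_fun_diff: "Vector_Spaces.linear s (*) m1 \<Longrightarrow> Vector_Spaces.linear s (*) m2 \<Longrightarrow> Vector_Spaces.linear s (*) (m1 - m2)"
  unfolding Vector_Spaces.linear_iff by (auto simp: algebra_simps)

lemma lin_fun_add: "Vector_Spaces.linear s (*) m1 \<Longrightarrow> Vector_Spaces.linear s (*) m2 \<Longrightarrow> Vector_Spaces.linear s (*) (m1 + m2)"
  unfolding Vector_Spaces.linear_iff by (auto simp: algebra_simps)

lemma lin_fun_scale: "Vector_Spaces.linear s (*) m1 \<Longrightarrow> Vector_Spaces.linear s (*) (\<lambda>x. c * m1 x)"
  unfolding Vector_Spaces.linear_iff by (auto simp: algebra_simps)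

lemma lin_fun_zero: "vector_space s \<Longrightarrow> Vector_Spaces.linear s (*) (\<lambda>x. 0)"
  unfolding Vector_Spaces.linear_iff using vs_k by auto

lemma lin_eq_on_span:
  fixes s :: "'k::field \<Rightarrow> 'v::ab_group_add \<Rightarrow> 'v" and h1 h2 :: "'v \<Rightarrow> 'k"
  assumes "Vector_Spaces.linear s (*) h1" "Vector_Spaces.linear s (*) h2"
    "module.span s C = UNIV" "\<forall>e\<in>C. h1 e = h2 e"
  shows "h1 = h2"
proof
  fix x
  have vp: "vector_space_pair s ((*) :: 'k \<Rightarrow> 'k \<Rightarrow> 'k)"
    using assms(1) unfolding vector_space_pair_def Vector_Spaces.linear_iff by auto
  show "h1 x = h2 x"
    using vector_space_pair.linear_eq_on[OF vp assms(1,2), of x C] assms(3,4) by auto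
qed


context
  fixes s :: "'k::field \<Rightarrow> 'v::ab_group_add \<Rightarrow> 'v" and Bs :: "'v set" and b :: "'v \<Rightarrow> 'v \<Rightarrow> 'k"
  assumes fd: "finite_dimensional_vector_space s Bs" and nd: "nondeg_bilinear s b"
begin

interpretation V: finite_dimensional_vector_space s Bs by (rule fd)

lemma bl: "Vector_Spaces.linear s (*) (b u)" using nd unfolding nondeg_bilinear_def by auto
lemma br: "Vector_Spaces.linear s (*) (\<lambda>u. b u w)" using nd unfolding nondeg_bilinear_def by auto
lemma b_add1: "b (x + y) w = b x w + b y w" using lin_add[OF br] by simp
lemma b_diff1: "b (x - y) w = b x w - b y w" using lin_diff[OF br] by simp
lemma b_scale1: "b (s c x) w = c * b x w" using lin_scale[OF br] by simp
lemma b_sum1: "b (sum F A) w = (\<Sum>a\<in>A. b (F a) w)" using lin_sum[OF br] by simp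
lemma b_zero1: "b 0 w = 0" using lin_zero[OF br] by simp
lemma nd1: "(\<forall>w. b u w = 0) \<Longrightarrow> u = 0" using nd unfolding nondeg_bilinear_def by auto

lemma b_eq_on: assumes "V.span C = UNIV" "\<forall>e\<in>C. b x e = b y e" shows "x = y"
proof -
  have "b x = b y" by (rule lin_eq_on_span[OF bl bl assms])
  then have "\<forall>w. b (x - y) w = 0" by (simp add: b_diff1)
  then have "x - y = 0" by (rule nd1)
  then show ?thesis by simp
qed

lemma rep_exists:
  assumes "V.independent C" "V.span C = UNIV"
  shows "\<exists>v. \<forall>e\<in>C. b v e = h e"
proof -
  have fin: "finite C" using V.finiteI_independent assms(1) .
  have ie: "\<And>c. (\<Sum>v\<in>C. s (c v) v) = 0 \<Longrightarrow> (\<forall>v\<in>C. c v = 0)"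
    using assms(1) V.independent_explicit[of C] by blast
  define Psi where "Psi v = (\<Sum>e\<in>C. s (b v e) e)" for v
  have lin: "Vector_Spaces.linear s s Psi"
    unfolding Vector_Spaces.linear_iff Psi_def
    using V.vector_space_axioms
    by (auto simp: b_add1 b_scale1 V.scale_left_distrib sum.distrib V.scale_sum_right)
  have "inj Psi"
  proof (rule injI)
    fix x y assume "Psi x = Psi y"
    then have "(\<Sum>e\<in>C. s (b x e - b y e) e) = 0"
      by (simp add: Psi_def V.scale_left_diff_distrib sum_subtractf)
    then have "\<forall>e\<in>C. b x e - b y e = 0"
      by (rule ie)
    then show "x = y" using b_eq_on[OF assms(2)] by auto
  qed
  then have "surj Psi" using V.linear_inj_imp_surj lin by auto
  then obtain v where v: "Psi v = (\<Sum>e\<in>C. s (h e) e)" by (metis surjD)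
  then have "(\<Sum>e\<in>C. s (b v e - h e) e) = 0"
    by (simp add: Psi_def V.scale_left_diff_distrib sum_subtractf)
  then have "\<forall>e\<in>C. b v e - h e = 0"
    by (rule ie)
  then show ?thesis by auto
qed

lemma onto_dual:
  assumes "Vector_Spaces.linear s (*) l"
  shows "\<exists>v. b v = l"
proof -
  obtain v where v: "\<forall>e\<in>Bs. b v e = l e"
    using rep_exists[OF V.independent_Basis V.span_Basis] by blast
  show ?thesis
    by (rule exI[of _ v], rule lin_eq_on_span[OF bl assms V.span_Basis v])
qed


lemma dual_basis:
  assumes "V.independent C" "V.span C = UNIV"
  obtains u where "\<forall>e\<in>C. \<forall>e'\<in>C. b (u e) e' = (if e' = e then 1 else 0)"
proof -
  have "\<forall>e\<in>C. \<exists>v. \<forall>e'\<in>C. b v e' = (if e' = e then 1 else 0)"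
  proof
    fix e show "\<exists>v. \<forall>e'\<in>C. b v e' = (if e' = e then 1 else 0)"
      by (rule rep_exists[OF assms, of "\<lambda>e'. if e' = e then 1 else 0"])
  qed
  then show ?thesis using that by metis
qed

lemma ann_span:
  assumes C: "V.independent C" "V.span C = UNIV"
    and u: "\<forall>e\<in>C. \<forall>e'\<in>C. b (u e) e' = (if e' = e then 1 else 0)"
    and AC: "A \<subseteq> C" and va: "\<forall>a\<in>A. b v a = 0"
  shows "v \<in> V.span (u ` (C - A))"
proof -
  have fin: "finite C" using V.finiteI_independent C(1) .
  define v' where "v' = (\<Sum>e\<in>C-A. s (b v e) (u e))"
  have "\<forall>e'\<in>C. b v' e' = b v e'"
  proof
    fix e' assume e': "e' \<in> C"
    have "b v' e' = (\<Sum>e\<in>C-A. b v e * b (u e) e')" by (simp add: v'_def b_sum1 b_scale1)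
    also have "\<dots> = (\<Sum>e\<in>C-A. if e' = e then b v e else 0)"
      using u e' by (intro sum.cong) auto
    also have "\<dots> = (if e' \<in> C - A then b v e' else 0)"
      using fin by (simp add: sum.delta)
    also have "\<dots> = b v e'" using va e' by auto
    finally show "b v' e' = b v e'" .
  qed
  then have "v' = v" by (rule b_eq_on[OF C(2)])
  moreover have "v' \<in> V.span (u ` (C-A))" unfolding v'_def
    by (intro V.span_sum V.span_scale V.span_base) auto
  ultimately show ?thesis by simp
qed

lemma dual_inj:
  assumes u: "\<forall>e\<in>C. \<forall>e'\<in>C. b (u e) e' = (if e' = e then 1 else 0)"
  shows "inj_on u C"
proof (rule inj_onI)
  fix e e' assume "e \<in> C" "e' \<in> C" "u e = u e'"
  then have "b (u e) e = b (u e') e" by simp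
  then show "e = e'" using u \<open>e \<in> C\<close> \<open>e' \<in> C\<close> by (auto split: if_splits)
qed

lemma dual_indep:
  assumes C: "V.independent C" "V.span C = UNIV"
    and u: "\<forall>e\<in>C. \<forall>e'\<in>C. b (u e) e' = (if e' = e then 1 else 0)"
    and SC: "S \<subseteq> C"
  shows "V.independent (u ` S)"
proof -
  have fin: "finite S" using V.finiteI_independent C(1) SC finite_subset by blast
  have inj: "inj_on u S" using dual_inj[OF u] SC inj_on_subset by blast
  have "\<forall>x\<in>u ` S. c x = 0" if c: "(\<Sum>x\<in>u ` S. s (c x) x) = 0" for c
  proof
    fix x assume "x \<in> u ` S"
    then obtain e' where e': "e' \<in> S" "x = u e'" by auto
    have "(\<Sum>e\<in>S. s (c (u e)) (u e)) = 0" using c by (simp add: sum.reindex[OF inj])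
    then have "0 = b (\<Sum>e\<in>S. s (c (u e)) (u e)) e'" by (simp add: b_zero1)
    also have "\<dots> = (\<Sum>e\<in>S. c (u e) * b (u e) e')" by (simp add: b_sum1 b_scale1)
    also have "\<dots> = (\<Sum>e\<in>S. if e' = e then c (u e) else 0)"
    proof (intro sum.cong refl)
      fix e assume "e \<in> S"
      then have "e \<in> C" "e' \<in> C" using SC e' by auto
      then show "c (u e) * b (u e) e' = (if e' = e then c (u e) else 0)" using u by auto
    qed
    also have "\<dots> = c (u e')" using fin e' by (simp add: sum.delta)
    finally show "c x = 0" using e' by simp
  qed
  then show ?thesis using V.independent_explicit fin by blast
qed

end


lemma span_disj:
  fixes s :: "'k::field \<Rightarrow> 'v::ab_group_add \<Rightarrow> 'v"
  assumes vs: "vector_space s" and C: "module.independent s C" and AC: "A \<subseteq> C"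
    and x1: "x \<in> module.span s A" and x2: "x \<in> module.span s (C - A)"
  shows "x = 0"
proof -
  interpret V: vector_space s by (rule vs)
  have xC: "x \<in> V.span C" using x1 AC V.span_mono by blast
  have r1: "V.representation C x = V.representation A x"
    by (rule V.representation_extend[OF C x1 AC])
  have r2: "V.representation C x = V.representation (C - A) x"
    by (rule V.representation_extend[OF C x2]) auto
  have z: "V.representation C x b = 0" for b
  proof (rule ccontr)
    assume "V.representation C x b \<noteq> 0"
    then have "b \<in> A" "b \<in> C - A" using r1 r2 V.representation_ne_zero by metis+
    then show False by auto
  qed
  have "x = (\<Sum>b | V.representation C x b \<noteq> 0. s (V.representation C x b) b)"
    using V.sum_nonzero_representation_eq[OF C xC] by simp
  also have "\<dots> = 0" using z by simp
  finally show ?thesis .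
qed

theorem lemma4p2:
  fixes s1 :: "'k::field \<Rightarrow> 'v1::ab_group_add \<Rightarrow> 'v1"
    and s2 :: "'k \<Rightarrow> 'v2::ab_group_add \<Rightarrow> 'v2"
    and s3 :: "'k \<Rightarrow> 'v3::ab_group_add \<Rightarrow> 'v3"
    and B1 :: "'v1 set" and B2 :: "'v2 set" and B3 :: "'v3 set"
    and f :: "'v1 \<Rightarrow> 'v2" and g :: "'v2 \<Rightarrow> 'v3"
    and b :: "'v2 \<Rightarrow> 'v2 \<Rightarrow> 'k"
  assumes fd1: "finite_dimensional_vector_space s1 B1"
    and fd2: "finite_dimensional_vector_space s2 B2"
    and fd3: "finite_dimensional_vector_space s3 B3"
    and lin_f: "Vector_Spaces.linear s1 s2 f"
    and lin_g: "Vector_Spaces.linear s2 s3 g"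
    and complex: "\<forall>x. g (f x) = 0"
    and pairing: "nondeg_bilinear s2 b"
    and im_f_sub: "pair_iso b ` range f \<subseteq> dual_map g ` dual_space s3"
    and well_def: "pair_iso b ` {v. g v = 0} \<subseteq> {l \<in> dual_space s2. dual_map f l = (\<lambda>_. 0)}"
  shows "bij_betw
           (induced_quot_map (pair_iso b)
              {l \<in> dual_space s2. dual_map f l = (\<lambda>_. 0)} (dual_map g ` dual_space s3))
           (quot {v. g v = 0} (range f))
           (quot {l \<in> dual_space s2. dual_map f l = (\<lambda>_. 0)} (dual_map g ` dual_space s3))
         \<longleftrightarrow> {v. g v = 0} \<inter> (pair_iso b -` (dual_map g ` dual_space s3)) \<subseteq> range f"
proof -
  interpret V1: finite_dimensional_vector_space s1 B1 by (rule fd1)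
  interpret V2: finite_dimensional_vector_space s2 B2 by (rule fd2)
  interpret V3: finite_dimensional_vector_space s3 B3 by (rule fd3)
  interpret lf: Vector_Spaces.linear s1 s2 f by (rule lin_f)
  interpret lg: Vector_Spaces.linear s2 s3 g by (rule lin_g)
  have pi: "pair_iso b = b" by (rule ext) (simp add: pair_iso_def)
  note bA = b_add1[OF fd2 pairing] and bD = b_diff1[OF fd2 pairing]
    and bS = b_scale1[OF fd2 pairing] and bZ = b_zero1[OF fd2 pairing]
    and bl = bl[OF fd2 pairing]
  have bDf: "b (x - y) = b x - b y" for x y by (rule ext) (simp add: bD)
  have bAf: "b (x + y) = b x + b y" for x y by (rule ext) (simp add: bA)
  have bZf: "b 0 = 0" by (rule ext) (simp add: bZ)
  define K where "K = {v. g v = 0}"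
  define I where "I = range f"
  define Ks where "Ks = {l \<in> dual_space s2. dual_map f l = (\<lambda>_. 0)}"
  define Is where "Is = dual_map g ` dual_space s3"
  define h where "h = induced_quot_map b Ks Is"
  have Is_char: "l \<in> Is \<longleftrightarrow> (\<exists>m. Vector_Spaces.linear s3 (*) m \<and> l = m \<circ> g)" for l
    by (auto simp: Is_def dual_map_def dual_space_def)
  have Is_diff: "x - y \<in> Is" if xy: "x \<in> Is" "y \<in> Is" for x y
  proof -
    obtain m1 where m1: "Vector_Spaces.linear s3 (*) m1" "x = m1 \<circ> g"
      using xy(1) unfolding Is_char by blast
    obtain m2 where m2: "Vector_Spaces.linear s3 (*) m2" "y = m2 \<circ> g"
      using xy(2) unfolding Is_char by blast
    have "Vector_Spaces.linear s3 (*) (m1 - m2)" using m1(1) m2(1) by (rule lin_fun_diff)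
    moreover have "x - y = (m1 - m2) \<circ> g" using m1(2) m2(2) by (simp add: fun_eq_iff)
    ultimately show ?thesis unfolding Is_char by blast
  qed
  have Is_add: "x + y \<in> Is" if xy: "x \<in> Is" "y \<in> Is" for x y
  proof -
    obtain m1 where m1: "Vector_Spaces.linear s3 (*) m1" "x = m1 \<circ> g"
      using xy(1) unfolding Is_char by blast
    obtain m2 where m2: "Vector_Spaces.linear s3 (*) m2" "y = m2 \<circ> g"
      using xy(2) unfolding Is_char by blast
    have "Vector_Spaces.linear s3 (*) (m1 + m2)" using m1(1) m2(1) by (rule lin_fun_add)
    moreover have "x + y = (m1 + m2) \<circ> g" using m1(2) m2(2) by (simp add: fun_eq_iff)
    ultimately show ?thesis unfolding Is_char by blast
  qed
  have Is_scale: "(\<lambda>w. c * x w) \<in> Is" if xI: "x \<in> Is" for x c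
  proof -
    obtain m1 where m1: "Vector_Spaces.linear s3 (*) m1" "x = m1 \<circ> g"
      using xI unfolding Is_char by blast
    have "Vector_Spaces.linear s3 (*) (\<lambda>y. c * m1 y)" using m1(1) by (rule lin_fun_scale)
    moreover have "(\<lambda>w. c * x w) = (\<lambda>y. c * m1 y) \<circ> g" using m1(2) by (simp add: fun_eq_iff)
    ultimately show ?thesis unfolding Is_char by blast
  qed
  have Is_0: "0 \<in> Is"
  proof -
    have "Vector_Spaces.linear s3 (*) (\<lambda>_. 0)" by (rule lin_fun_zero[OF V3.vector_space_axioms])
    moreover have "0 = (\<lambda>_. 0) \<circ> g" by (simp add: fun_eq_iff)
    ultimately show ?thesis unfolding Is_char by blast
  qed
  have K_sub: "V2.subspace K" unfolding K_def by (rule lg.subspace_kernel)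
  have I_sub: "V2.subspace I" unfolding I_def by (rule lf.subspace_image[OF V1.subspace_UNIV])
  have IK: "I \<subseteq> K" using complex by (auto simp: I_def K_def)
  have bI: "b v \<in> Is" if "v \<in> I" for v using im_f_sub that by (auto simp: pi I_def Is_def)
  have bK: "b v \<in> Ks" if "v \<in> K" for v using well_def that by (auto simp: pi K_def Ks_def)
  define cosK where "cosK a = {x \<in> K. x - a \<in> I}" for a
  define cosS where "cosS l = {y \<in> Ks. y - l \<in> Is}" for l
  have qK: "quot K I = cosK ` K" by (simp add: quot_def cosK_def)
  have qS: "quot Ks Is = cosS ` Ks" by (simp add: quot_def cosS_def)
  have hK: "h (cosK a) = cosS (b a)" if aK: "a \<in> K" for a
  proof -
    have "y - b a \<in> Is" if "y - b x \<in> Is" "x - a \<in> I" for x y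
    proof -
      have e: "y - b a = (y - b x) + b (x - a)" unfolding bDf by (simp add: algebra_simps)
      show ?thesis unfolding e by (rule Is_add[OF that(1) bI[OF that(2)]])
    qed
    moreover have "a - a \<in> I" using V2.subspace_0[OF I_sub] by simp
    ultimately show ?thesis using aK
      unfolding h_def induced_quot_map_def cosK_def cosS_def by blast
  qed
  have cosK_eq: "cosK a = cosK a'" if "a - a' \<in> I" for a a'
  proof -
    have "x - a \<in> I \<longleftrightarrow> x - a' \<in> I" for x
    proof
      assume "x - a \<in> I"
      then have "(x - a) + (a - a') \<in> I" using V2.subspace_add[OF I_sub] that by blast
      then show "x - a' \<in> I" by simp
    next
      assume "x - a' \<in> I"
      then have "(x - a') - (a - a') \<in> I" using V2.subspace_diff[OF I_sub] that by blast
      then show "x - a \<in> I" by simp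
    qed
    then show ?thesis unfolding cosK_def by blast
  qed
  have cosK_self: "a \<in> cosK a" if "a \<in> K" for a
    using that V2.subspace_0[OF I_sub] unfolding cosK_def by simp
  have cosS_eq: "cosS l = cosS l'" if "l - l' \<in> Is" for l l'
  proof -
    have "y - l \<in> Is \<longleftrightarrow> y - l' \<in> Is" for y
    proof
      assume "y - l \<in> Is"
      then have "(y - l) + (l - l') \<in> Is" using Is_add that by blast
      then show "y - l' \<in> Is" by simp
    next
      assume "y - l' \<in> Is"
      then have "(y - l') - (l - l') \<in> Is" using Is_diff that by blast
      then show "y - l \<in> Is" by simp
    qed
    then show ?thesis unfolding cosS_def by blast
  qed
  have cosS_self: "l \<in> cosS l" if "l \<in> Ks" for l
    using that Is_0 unfolding cosS_def by simp
  have zK: "0 \<in> K" using V2.subspace_0[OF K_sub] .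
  have inj_iff: "inj_on h (cosK ` K) \<longleftrightarrow> (\<forall>v\<in>K. b v \<in> Is \<longrightarrow> v \<in> I)"
  proof
    assume inj: "inj_on h (cosK ` K)"
    show "\<forall>v\<in>K. b v \<in> Is \<longrightarrow> v \<in> I"
    proof (intro ballI impI)
      fix v assume vK: "v \<in> K" and bv: "b v \<in> Is"
      have "h (cosK v) = h (cosK 0)"
        using hK[OF vK] hK[OF zK] cosS_eq[of "b v" "b 0"] bv bZf by simp
      then have "cosK v = cosK 0" using inj vK zK by (auto dest: inj_onD)
      then have "v \<in> cosK 0" using cosK_self[OF vK] by simp
      then show "v \<in> I" unfolding cosK_def by simp
    qed
  next
    assume c: "\<forall>v\<in>K. b v \<in> Is \<longrightarrow> v \<in> I"
    show "inj_on h (cosK ` K)"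
    proof (rule inj_onI)
      fix X Y assume "X \<in> cosK ` K" "Y \<in> cosK ` K" and hXY: "h X = h Y"
      then obtain a a' where a: "a \<in> K" "X = cosK a" and a': "a' \<in> K" "Y = cosK a'" by blast
      have "cosS (b a) = cosS (b a')" using hXY a a' hK by simp
      then have "b a \<in> cosS (b a')" using cosS_self[OF bK[OF a(1)]] by simp
      then have "b (a - a') \<in> Is" unfolding cosS_def by (simp add: bDf)
      moreover have "a - a' \<in> K" using V2.subspace_diff[OF K_sub a(1) a'(1)] .
      ultimately have "a - a' \<in> I" using c by blast
      then show "X = Y" using a a' cosK_eq by simp
    qed
  qed
  have surj_if: "h ` (cosK ` K) = cosS ` Ks" if sc: "\<forall>l\<in>Ks. \<exists>a\<in>K. l - b a \<in> Is"
  proof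
    show "h ` (cosK ` K) \<subseteq> cosS ` Ks" using hK bK by auto
    show "cosS ` Ks \<subseteq> h ` (cosK ` K)"
    proof
      fix Y assume "Y \<in> cosS ` Ks"
      then obtain l where l: "l \<in> Ks" "Y = cosS l" by blast
      then obtain a where a: "a \<in> K" "l - b a \<in> Is" using sc by blast
      have "Y = h (cosK a)" using l cosS_eq[OF a(2)] hK[OF a(1)] by simp
      then show "Y \<in> h ` (cosK ` K)" using a(1) by blast
    qed
  qed
  have key: "\<forall>l\<in>Ks. \<exists>a\<in>K. l - b a \<in> Is" if c: "\<forall>v\<in>K. b v \<in> Is \<longrightarrow> v \<in> I"
  proof -
    obtain A where A: "A \<subseteq> I" "V2.independent A" "I \<subseteq> V2.span A" "card A = V2.dim I"
      using V2.basis_exists[of I] by blast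
    define C where "C = V2.extend_basis A"
    have C: "V2.independent C" "V2.span C = UNIV" "A \<subseteq> C"
      using V2.extend_basis_superset[OF A(2)] V2.independent_extend_basis[OF A(2)]
        V2.span_extend_basis[OF A(2)] C_def by auto
    have finC: "finite C" using V2.finiteI_independent C(1) .
    have cardC: "card C = card B2" using V2.dim_eq_card[of C UNIV] C V2.dim_UNIV by simp
    obtain u where u: "\<forall>e\<in>C. \<forall>e'\<in>C. b (u e) e' = (if e' = e then 1 else 0)"
      using dual_basis[OF fd2 pairing C(1,2)] by blast
    define K' where "K' = {v. \<forall>x. b v (f x) = 0}"
    have K'span: "K' \<subseteq> V2.span (u ` (C - A))"
    proof
      fix v assume "v \<in> K'"
      then have "\<forall>a\<in>A. b v a = 0" using A(1) by (auto simp: K'_def I_def)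
      then show "v \<in> V2.span (u ` (C - A))" by (rule ann_span[OF fd2 pairing C(1,2) u C(3)])
    qed
    have dimK': "V2.dim K' \<le> card B2 - V2.dim I"
    proof -
      have "V2.dim K' \<le> card (u ` (C - A))" by (rule V2.dim_le_card[OF K'span]) (simp add: finC)
      also have "\<dots> \<le> card (C - A)" by (rule card_image_le) (simp add: finC)
      also have "\<dots> = card C - card A" by (rule card_Diff_subset) (use finC C(3) finite_subset in auto)
      finally show ?thesis using cardC A(4) by simp
    qed
    obtain A2 where A2: "A2 \<subseteq> K" "V2.independent A2" "K \<subseteq> V2.span A2" "card A2 = V2.dim K"
      using V2.basis_exists[of K] by blast
    define C2 where "C2 = V2.extend_basis A2"
    have C2: "V2.independent C2" "V2.span C2 = UNIV" "A2 \<subseteq> C2"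
      using V2.extend_basis_superset[OF A2(2)] V2.independent_extend_basis[OF A2(2)]
        V2.span_extend_basis[OF A2(2)] C2_def by auto
    have finC2: "finite C2" using V2.finiteI_independent C2(1) .
    have cardC2: "card C2 = card B2" using V2.dim_eq_card[of C2 UNIV] C2 V2.dim_UNIV by simp
    obtain u2 where u2: "\<forall>e\<in>C2. \<forall>e'\<in>C2. b (u2 e) e' = (if e' = e then 1 else 0)"
      using dual_basis[OF fd2 pairing C2(1,2)] by blast
    define J' where "J' = V2.span (u2 ` (C2 - A2))"
    have dimJ': "V2.dim J' = card B2 - V2.dim K"
    proof -
      have "V2.dim J' = card (u2 ` (C2 - A2))" unfolding J'_def
        by (rule V2.dim_span_eq_card_independent[OF dual_indep[OF fd2 pairing C2(1,2) u2]]) auto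
      also have "\<dots> = card (C2 - A2)"
        by (rule card_image, rule inj_on_subset[OF dual_inj[OF fd2 pairing u2]]) auto
      also have "\<dots> = card C2 - card A2" by (rule card_Diff_subset) (use finC2 C2(3) finite_subset in auto)
      finally show ?thesis using cardC2 A2(4) by simp
    qed
    have bSf: "b (s2 c x) = (\<lambda>w. c * b x w)" for c x by (rule ext) (simp add: bS)
    have Jsub: "V2.subspace {v. b v \<in> Is}"
      by (rule V2.subspaceI) (auto simp: bZf bAf bSf Is_0 Is_add Is_scale)
    have u2J: "b (u2 e) \<in> Is" if e: "e \<in> C2 - A2" for e
    proof -
      have span_inj: "inj_on g (V2.span (C2 - A2))"
        unfolding lg.inj_on_iff_eq_0[OF V2.subspace_span]
      proof (intro ballI impI)
        fix x assume x: "x \<in> V2.span (C2 - A2)" "g x = 0"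
        then have "x \<in> V2.span A2" using A2(3) by (auto simp: K_def)
        then show "x = 0" by (rule span_disj[OF V2.vector_space_axioms C2(1) C2(3) _ x(1)])
      qed
      have ind: "V3.independent (g ` (C2 - A2))"
        by (rule lg.independent_injective_image[OF _ span_inj]) (rule V2.independent_mono[OF C2(1)]; auto)
      have vp: "vector_space_pair s3 ((*)::'k\<Rightarrow>'k\<Rightarrow>'k)"
        unfolding vector_space_pair_def using V3.vector_space_axioms vs_k by auto
      obtain m where m: "Vector_Spaces.linear s3 (*) m"
          "\<forall>y\<in>g ` (C2 - A2). m y = b (u2 e) (inv_into (C2 - A2) g y)"
        using vector_space_pair.linear_independent_extend[OF vp ind, of "\<lambda>y. b (u2 e) (inv_into (C2 - A2) g y)"] by blast
      have injg: "inj_on g (C2 - A2)" using span_inj V2.span_superset inj_on_subset by blast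
      have "b (u2 e) = m \<circ> g"
      proof (rule lin_eq_on_span[OF bl _ C2(2)])
        show "Vector_Spaces.linear s2 (*) (m \<circ> g)" by (rule Vector_Spaces.linear_compose[OF lin_g m(1)])
        show "\<forall>x\<in>C2. b (u2 e) x = (m \<circ> g) x"
        proof
          fix x assume x: "x \<in> C2"
          show "b (u2 e) x = (m \<circ> g) x"
          proof (cases "x \<in> A2")
            case True
            then have "g x = 0" using A2(1) by (auto simp: K_def)
            moreover have "b (u2 e) x = 0" using u2 x e True by auto
            ultimately show ?thesis using lin_zero[OF m(1)] by simp
          next
            case False
            then have "x \<in> C2 - A2" using x by simp
            then show ?thesis using m(2) injg by (simp add: inv_into_f_f)
          qed
        qed
      qed
      then show ?thesis using m(1) unfolding Is_char by blast
    qed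
    have J'J: "J' \<subseteq> {v. b v \<in> Is}" unfolding J'_def
      by (rule V2.span_minimal[OF _ Jsub]) (use u2J in auto)
    define S where "S = {x + y | x y. x \<in> K \<and> y \<in> J'}"
    have J'_sub: "V2.subspace J'" unfolding J'_def by (rule V2.subspace_span)
    have dimS: "V2.dim S + V2.dim (K \<inter> J') = V2.dim K + V2.dim J'"
      unfolding S_def by (rule V2.dim_sums_Int[OF K_sub J'_sub])
    have "K \<inter> J' \<subseteq> I" using c J'J by auto
    then have d1: "V2.dim (K \<inter> J') \<le> V2.dim I" by (rule V2.dim_subset)
    have d2: "V2.dim K \<le> card B2" using V2.dim_subset_UNIV V2.dimension_def by simp
    have d3: "V2.dim I \<le> card B2" using V2.dim_subset_UNIV V2.dimension_def by simp
    have S_sub: "V2.subspace S" unfolding S_def by (rule V2.subspace_sums[OF K_sub J'_sub])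
    have K'_sub: "V2.subspace K'" unfolding K'_def by (rule V2.subspaceI) (auto simp: bA bS bZ)
    have SK': "S \<subseteq> K'"
    proof
      fix z assume "z \<in> S"
      then obtain x y where z: "z = x + y" "x \<in> K" "y \<in> J'" by (auto simp: S_def)
      have "b x \<in> Ks" using bK z(2) .
      then have bx: "\<forall>w. b x (f w) = 0" by (auto simp: Ks_def dual_map_def fun_eq_iff)
      have "b y \<in> Is" using J'J z(3) by auto
      then obtain m where m: "Vector_Spaces.linear s3 (*) m" "b y = m \<circ> g" unfolding Is_char by blast
      have byf: "\<forall>w. b y (f w) = 0" using complex lin_zero[OF m(1)] m(2) by simp
      show "z \<in> K'" using bx byf unfolding K'_def z(1) by (simp add: bA)
    qed
    have SeqK': "S = K'"
      by (rule V2.subspace_dim_equal[OF S_sub K'_sub SK']) (use dimS dimJ' dimK' d1 d2 d3 in linarith)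
    show ?thesis
    proof
      fix l assume l: "l \<in> Ks"
      then have ll: "Vector_Spaces.linear s2 (*) l" "\<forall>w. l (f w) = 0"
        by (auto simp: Ks_def dual_space_def dual_map_def fun_eq_iff)
      obtain v where v: "b v = l" using onto_dual[OF fd2 pairing ll(1)] by blast
      have "v \<in> K'" using v ll(2) by (simp add: K'_def)
      then have "v \<in> S" using SeqK' by simp
      then obtain x y where xy: "v = x + y" "x \<in> K" "y \<in> J'" by (auto simp: S_def)
      then have "l = b x + b y" using v bAf by simp
      then have "l - b x = b y" by simp
      moreover have "b y \<in> Is" using J'J xy(3) by auto
      ultimately show "\<exists>a\<in>K. l - b a \<in> Is" using xy(2) by metis
    qed
  qed
  have rhs: "({v. g v = 0} \<inter> (pair_iso b -` (dual_map g ` dual_space s3)) \<subseteq> range f)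
     \<longleftrightarrow> (\<forall>v\<in>K. b v \<in> Is \<longrightarrow> v \<in> I)"
    unfolding pi K_def Is_def I_def by auto
  have lhs: "bij_betw
           (induced_quot_map (pair_iso b)
              {l \<in> dual_space s2. dual_map f l = (\<lambda>_. 0)} (dual_map g ` dual_space s3))
           (quot {v. g v = 0} (range f))
           (quot {l \<in> dual_space s2. dual_map f l = (\<lambda>_. 0)} (dual_map g ` dual_space s3))
       \<longleftrightarrow> bij_betw h (cosK ` K) (cosS ` Ks)"
    unfolding pi h_def[symmetric] K_def[symmetric] I_def[symmetric] Ks_def[symmetric] Is_def[symmetric]
      qK qS ..
  have fin: "bij_betw h (cosK ` K) (cosS ` Ks) \<longleftrightarrow> (\<forall>v\<in>K. b v \<in> Is \<longrightarrow> v \<in> I)"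
    unfolding bij_betw_def
  proof
    assume "inj_on h (cosK ` K) \<and> h ` cosK ` K = cosS ` Ks"
    then show "\<forall>v\<in>K. b v \<in> Is \<longrightarrow> v \<in> I" using inj_iff by simp
  next
    assume c: "\<forall>v\<in>K. b v \<in> Is \<longrightarrow> v \<in> I"
    show "inj_on h (cosK ` K) \<and> h ` cosK ` K = cosS ` Ks"
      using inj_iff c surj_if[OF key[OF c]] by simp
  qed
  show ?thesis by (simp only: lhs rhs fin)
qed
end
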